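(* Let $p\ge1$, $l\in\mathbb{Z}_{\ge0}$, and $s_1,\dots,s_p\in\mathbb{C}$ with $|s_i|<1$ or $s_i=1$ for every $1\le i\le p$. Then for every $\varepsilon>0$, $(\Delta^l\mathtt{c}_{s_1,\dots,s_p,0})(m)=O\bigl(m^{-(l+1-\varepsilon)}\bigr)$ as $m\to\infty$.
   Context: Convention $0^0=1$. For $u_1,\dots,u_q\in\mathbb{C}$, $\mathtt{c}_{u_1,\dots,u_q}(m)=\sum_{m=m_1\ge\cdots\ge m_q\ge0}\frac{u_1^{m_1-m_2}\cdots u_{q-1}^{m_{q-1}-m_q}}{(m_1+1)\cdots(m_{q-1}+1)}u_q^{m_q}$; here $q=p+1$ and $u_{p+1}=0$. $(\Delta a)(m)=a(m)-a(m+1)$. *)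

theory Defs
  imports "HOL-Analysis.Analysis" "HOL-Library.Landau_Symbols"
begin

text \<open>Index tuples (m_1,...,m_q) with m = m_1 \<ge> ... \<ge> m_q \<ge> 0, as lists of length q
  (list position i corresponds to m_(i+1)).\<close>
definition chains :: "nat \<Rightarrow> nat \<Rightarrow> nat list set" where
  "chains q m = {ms. length ms = q \<and> ms ! 0 = m \<and> sorted_wrt (\<ge>) ms \<and> set ms \<subseteq> {..m}}"

text \<open>c_{u_1,...,u_q}(m); u is the list [u_1,...,u_q] (q \<ge> 1). Note 0^0 = 1 for ^.\<close>
definition ccoef :: "complex list \<Rightarrow> nat \<Rightarrow> complex" where
  "ccoef u m = (\<Sum>ms\<in>chains (length u) m.
      (\<Prod>i<length u - 1. u ! i ^ (ms ! i - ms ! (i+1)) / of_nat (ms ! i + 1))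
      * u ! (length u - 1) ^ (ms ! (length u - 1)))"

definition fdiff :: "(nat \<Rightarrow> complex) \<Rightarrow> nat \<Rightarrow> complex" where
  "fdiff a = (\<lambda>m. a m - a (Suc m))"

end

theory Submission
  imports Defs "HOL-Real_Asymp.Real_Asymp"
begin


lemma fdiff_Suc: "(fdiff ^^ Suc l) f = fdiff ((fdiff^^l) f)" by simp
lemma fdiff_Suc': "(fdiff ^^ Suc l) f = (fdiff^^l) (fdiff f)" by (subst funpow_Suc_right) simp

lemma fdiff_pow_add: "(fdiff^^l) (\<lambda>m. f m + g m) = (\<lambda>m. (fdiff^^l) f m + (fdiff^^l) g m)"
  by (induction l) (auto simp: fdiff_def fun_eq_iff)
lemma fdiff_pow_minus: "(fdiff^^l) (\<lambda>m. - f m) = (\<lambda>m. - (fdiff^^l) f m)"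
  by (induction l) (auto simp: fdiff_def fun_eq_iff)
lemma fdiff_pow_shift: "(fdiff^^l) (\<lambda>m. f (Suc m)) = (\<lambda>m. (fdiff^^l) f (Suc m))"
  by (induction l) (auto simp: fdiff_def fun_eq_iff)

definition PP :: "real \<Rightarrow> (nat \<Rightarrow> complex) \<Rightarrow> bool" where
  "PP \<beta> f \<longleftrightarrow> (\<forall>l \<epsilon>. \<epsilon> > 0 \<longrightarrow> (\<exists>K. \<forall>m. norm ((fdiff^^l) f m) \<le> K * (real m + 1) powr (-(real l + \<beta> - \<epsilon>))))"

lemma bound_K_nonneg: assumes "\<forall>m. norm (h m) \<le> K * (real m + 1) powr x" shows "K \<ge> 0"
proof -
  have "0 \<le> K * (real 0 + 1) powr x" using assms[rule_format, of 0] norm_ge_zero order_trans by blast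
  thus ?thesis by simp
qed

lemma powr_exp_mono: "y \<le> x \<Longrightarrow> (real m + 1) powr y \<le> (real m + 1) powr x"
  by (rule powr_mono) auto

lemma PP_mono: assumes "PP \<beta> f" "\<beta>' \<le> \<beta>" shows "PP \<beta>' f"
  unfolding PP_def
proof (intro allI impI)
  fix l and \<epsilon> :: real assume "\<epsilon> > 0"
  then obtain K where K: "\<forall>m. norm ((fdiff^^l) f m) \<le> K * (real m + 1) powr (-(real l + \<beta> - \<epsilon>))"
    using assms(1) unfolding PP_def by blast
  have K0: "K \<ge> 0" using bound_K_nonneg[OF K] .
  show "\<exists>K. \<forall>m. norm ((fdiff^^l) f m) \<le> K * (real m + 1) powr (-(real l + \<beta>' - \<epsilon>))"
  proof (intro exI allI)
    fix m
    have "K * (real m + 1) powr (-(real l + \<beta> - \<epsilon>)) \<le> K * (real m + 1) powr (-(real l + \<beta>' - \<epsilon>))"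
      using K0 assms(2) by (intro mult_left_mono powr_exp_mono) auto
    thus "norm ((fdiff^^l) f m) \<le> K * (real m + 1) powr (-(real l + \<beta>' - \<epsilon>))" using K order_trans by blast
  qed
qed

lemma PP_intro_small:
  assumes "\<epsilon>0 > 0"
    and "\<And>l \<epsilon>. 0 < \<epsilon> \<Longrightarrow> \<epsilon> \<le> \<epsilon>0 \<Longrightarrow> \<exists>K. \<forall>m. norm ((fdiff^^l) f m) \<le> K * (real m + 1) powr (-(real l + \<beta> - \<epsilon>))"
  shows "PP \<beta> f"
  unfolding PP_def
proof (intro allI impI)
  fix l and \<epsilon> :: real assume e: "\<epsilon> > 0"
  define e' where "e' = min \<epsilon> \<epsilon>0"
  have "0 < e'" "e' \<le> \<epsilon>0" using e assms(1) by (auto simp: e'_def)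
  then obtain K where K: "\<forall>m. norm ((fdiff^^l) f m) \<le> K * (real m + 1) powr (-(real l + \<beta> - e'))"
    using assms(2) by blast
  have K0: "K \<ge> 0" using bound_K_nonneg[OF K] .
  show "\<exists>K. \<forall>m. norm ((fdiff^^l) f m) \<le> K * (real m + 1) powr (-(real l + \<beta> - \<epsilon>))"
  proof (intro exI allI)
    fix m
    have "K * (real m + 1) powr (-(real l + \<beta> - e')) \<le> K * (real m + 1) powr (-(real l + \<beta> - \<epsilon>))"
      using K0 by (intro mult_left_mono powr_exp_mono) (auto simp: e'_def)
    thus "norm ((fdiff^^l) f m) \<le> K * (real m + 1) powr (-(real l + \<beta> - \<epsilon>))" using K order_trans by blast
  qed
qed

lemma shift_powr_le: "(real m + 2) powr x \<le> max 1 (2 powr x) * (real m + 1) powr x"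
proof (cases "x \<ge> 0")
  case True
  have "(real m + 2) powr x \<le> (2 * (real m + 1)) powr x" by (intro powr_mono2) (use True in auto)
  also have "\<dots> = 2 powr x * (real m + 1) powr x" by (rule powr_mult)
  also have "\<dots> \<le> max 1 (2 powr x) * (real m + 1) powr x" by (intro mult_right_mono) auto
  finally show ?thesis .
next
  case False
  have "(real m + 2) powr x \<le> (real m + 1) powr x" by (rule powr_mono2') (use False in auto)
  also have "\<dots> \<le> max 1 (2 powr x) * (real m + 1) powr x"
    using mult_right_mono[of 1 "max 1 (2 powr x)" "(real m + 1) powr x"] by simp
  finally show ?thesis .
qed

lemma PP_shift: assumes "PP \<beta> f" shows "PP \<beta> (\<lambda>m. f (Suc m))"
  unfolding PP_def
proof (intro allI impI)
  fix l and \<epsilon> :: real assume "\<epsilon> > 0"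
  then obtain K where K: "\<forall>m. norm ((fdiff^^l) f m) \<le> K * (real m + 1) powr (-(real l + \<beta> - \<epsilon>))"
    using assms(1) unfolding PP_def by blast
  have K0: "K \<ge> 0" using bound_K_nonneg[OF K] .
  define x where "x = -(real l + \<beta> - \<epsilon>)"
  show "\<exists>K. \<forall>m. norm ((fdiff^^l) (\<lambda>m. f (Suc m)) m) \<le> K * (real m + 1) powr (-(real l + \<beta> - \<epsilon>))"
  proof (intro exI allI)
    fix m
    have "norm ((fdiff^^l) (\<lambda>m. f (Suc m)) m) = norm ((fdiff^^l) f (Suc m))" by (simp add: fdiff_pow_shift)
    also have "\<dots> \<le> K * (real m + 2) powr x" using K[rule_format, of "Suc m"] by (simp add: x_def add.commute add.left_commute)
    also have "\<dots> \<le> K * (max 1 (2 powr x) * (real m + 1) powr x)" by (intro mult_left_mono shift_powr_le K0)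
    finally show "norm ((fdiff^^l) (\<lambda>m. f (Suc m)) m) \<le> (K * max 1 (2 powr x)) * (real m + 1) powr (-(real l + \<beta> - \<epsilon>))"
      by (simp add: x_def mult.assoc)
  qed
qed

lemma PP_minus: assumes "PP \<beta> f" shows "PP \<beta> (\<lambda>m. - f m)"
  using assms unfolding PP_def by (simp add: fdiff_pow_minus)

lemma PP_diff: assumes "PP \<beta> f" shows "PP (\<beta>+1) (fdiff f)"
  unfolding PP_def
proof (intro allI impI)
  fix l and \<epsilon> :: real assume "\<epsilon> > 0"
  then obtain K where K: "\<forall>m. norm ((fdiff^^Suc l) f m) \<le> K * (real m + 1) powr (-(real (Suc l) + \<beta> - \<epsilon>))"
    using assms(1) unfolding PP_def by blast
  have e: "-(real (Suc l) + \<beta> - \<epsilon>) = -(real l + (\<beta>+1) - \<epsilon>)" by simp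
  note K' = K[unfolded fdiff_Suc' e]
  from K' show "\<exists>K. \<forall>m. norm ((fdiff^^l) (fdiff f) m) \<le> K * (real m + 1) powr (-(real l + (\<beta>+1) - \<epsilon>))"
    by blast
qed

lemma PP_add: assumes "PP \<beta> f" "PP \<beta> g" shows "PP \<beta> (\<lambda>m. f m + g m)"
  unfolding PP_def
proof (intro allI impI)
  fix l and \<epsilon> :: real assume "\<epsilon> > 0"
  then obtain K1 K2 where K1: "\<forall>m. norm ((fdiff^^l) f m) \<le> K1 * (real m + 1) powr (-(real l + \<beta> - \<epsilon>))"
    and K2: "\<forall>m. norm ((fdiff^^l) g m) \<le> K2 * (real m + 1) powr (-(real l + \<beta> - \<epsilon>))"
    using assms unfolding PP_def by blast
  show "\<exists>K. \<forall>m. norm ((fdiff^^l) (\<lambda>m. f m + g m) m) \<le> K * (real m + 1) powr (-(real l + \<beta> - \<epsilon>))"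
  proof (intro exI allI)
    fix m
    have "norm ((fdiff^^l) (\<lambda>m. f m + g m) m) \<le> norm ((fdiff^^l) f m) + norm ((fdiff^^l) g m)"
      by (simp add: fdiff_pow_add norm_triangle_ineq)
    also have "\<dots> \<le> (K1 + K2) * (real m + 1) powr (-(real l + \<beta> - \<epsilon>))"
      using K1[rule_format, of m] K2[rule_format, of m] by (simp add: distrib_right)
    finally show "norm ((fdiff^^l) (\<lambda>m. f m + g m) m) \<le> (K1 + K2) * (real m + 1) powr (-(real l + \<beta> - \<epsilon>))" .
  qed
qed



definition QQ :: "nat \<Rightarrow> real \<Rightarrow> real \<Rightarrow> (nat \<Rightarrow> complex) \<Rightarrow> bool" where
  "QQ l \<beta> \<epsilon> f \<longleftrightarrow> (\<exists>K. \<forall>m. norm ((fdiff^^l) f m) \<le> K * (real m + 1) powr (-(real l + \<beta> - \<epsilon>)))"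

lemma PP_QQ: "PP \<beta> f \<longleftrightarrow> (\<forall>l \<epsilon>. \<epsilon> > 0 \<longrightarrow> QQ l \<beta> \<epsilon> f)"
  unfolding PP_def QQ_def by blast

lemma QQ_add: assumes "QQ l \<beta> \<epsilon> f" "QQ l \<beta> \<epsilon> g" shows "QQ l \<beta> \<epsilon> (\<lambda>m. f m + g m)"
proof -
  obtain K1 K2 where K1: "\<forall>m. norm ((fdiff^^l) f m) \<le> K1 * (real m + 1) powr (-(real l + \<beta> - \<epsilon>))"
    and K2: "\<forall>m. norm ((fdiff^^l) g m) \<le> K2 * (real m + 1) powr (-(real l + \<beta> - \<epsilon>))"
    using assms unfolding QQ_def by blast
  show ?thesis unfolding QQ_def
  proof (intro exI allI)
    fix m
    have "norm ((fdiff^^l) (\<lambda>m. f m + g m) m) \<le> norm ((fdiff^^l) f m) + norm ((fdiff^^l) g m)"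
      by (simp add: fdiff_pow_add norm_triangle_ineq)
    also have "\<dots> \<le> (K1 + K2) * (real m + 1) powr (-(real l + \<beta> - \<epsilon>))"
      using K1[rule_format, of m] K2[rule_format, of m] by (simp add: distrib_right)
    finally show "norm ((fdiff^^l) (\<lambda>m. f m + g m) m) \<le> (K1 + K2) * (real m + 1) powr (-(real l + \<beta> - \<epsilon>))" .
  qed
qed

lemma fdiff_mult: "fdiff (\<lambda>m. f m * g m) = (\<lambda>m. fdiff f m * g m + f (Suc m) * fdiff g m)"
  by (simp add: fdiff_def algebra_simps fun_eq_iff)

lemma PP_mult_aux: "\<forall>f g \<beta>1 \<beta>2 \<epsilon>. PP \<beta>1 f \<longrightarrow> PP \<beta>2 g \<longrightarrow> \<epsilon> > 0 \<longrightarrow> QQ l (\<beta>1+\<beta>2) \<epsilon> (\<lambda>m. f m * g m)"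
proof (induction l)
  case 0
  show ?case
  proof (intro allI impI)
    fix f g :: "nat \<Rightarrow> complex" and \<beta>1 \<beta>2 \<epsilon> :: real
    assume f: "PP \<beta>1 f" and g: "PP \<beta>2 g" and e: "\<epsilon> > 0"
    obtain K1 where K1: "\<forall>m. norm ((fdiff^^0) f m) \<le> K1 * (real m + 1) powr (-(real 0 + \<beta>1 - \<epsilon>/2))"
      using f e unfolding PP_def by (meson half_gt_zero)
    obtain K2 where K2: "\<forall>m. norm ((fdiff^^0) g m) \<le> K2 * (real m + 1) powr (-(real 0 + \<beta>2 - \<epsilon>/2))"
      using g e unfolding PP_def by (meson half_gt_zero)
    have K10: "K1 \<ge> 0" using bound_K_nonneg[OF K1] .
    show "QQ 0 (\<beta>1 + \<beta>2) \<epsilon> (\<lambda>m. f m * g m)" unfolding QQ_def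
    proof (intro exI allI)
      fix m
      have "norm ((fdiff^^0) (\<lambda>m. f m * g m) m) = norm (f m) * norm (g m)" by (simp add: norm_mult)
      also have "\<dots> \<le> (K1 * (real m + 1) powr (-(\<beta>1 - \<epsilon>/2))) * (K2 * (real m + 1) powr (-(\<beta>2 - \<epsilon>/2)))"
        using K1[rule_format, of m] K2[rule_format, of m] K10
        by (intro mult_mono) auto
      also have "\<dots> = (K1*K2) * (real m + 1) powr (-(real 0 + (\<beta>1+\<beta>2) - \<epsilon>))"
        by (simp add: powr_add[symmetric] algebra_simps)
      finally show "norm ((fdiff^^0) (\<lambda>m. f m * g m) m) \<le> (K1*K2) * (real m + 1) powr (-(real 0 + (\<beta>1+\<beta>2) - \<epsilon>))" .
    qed
  qed
next
  case (Suc l)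
  show ?case
  proof (intro allI impI)
    fix f g :: "nat \<Rightarrow> complex" and \<beta>1 \<beta>2 \<epsilon> :: real
    assume f: "PP \<beta>1 f" and g: "PP \<beta>2 g" and e: "\<epsilon> > 0"
    have 1: "QQ l ((\<beta>1+1)+\<beta>2) \<epsilon> (\<lambda>m. fdiff f m * g m)"
      using Suc.IH PP_diff[OF f] g e by blast
    have 2: "QQ l (\<beta>1+(\<beta>2+1)) \<epsilon> (\<lambda>m. f (Suc m) * fdiff g m)"
      using Suc.IH PP_shift[OF f] PP_diff[OF g] e by blast
    have eq1: "(\<beta>1+1)+\<beta>2 = (\<beta>1+\<beta>2) + 1" "\<beta>1+(\<beta>2+1) = (\<beta>1+\<beta>2) + 1" by simp_all
    have 3: "QQ l ((\<beta>1+\<beta>2) + 1) \<epsilon> (fdiff (\<lambda>m. f m * g m))"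
      unfolding fdiff_mult using QQ_add[OF 1[unfolded eq1] 2[unfolded eq1]] .
    have e2: "-(real l + ((\<beta>1+\<beta>2) + 1) - \<epsilon>) = -(real (Suc l) + (\<beta>1+\<beta>2) - \<epsilon>)" by simp
    show "QQ (Suc l) (\<beta>1 + \<beta>2) \<epsilon> (\<lambda>m. f m * g m)"
      using 3 unfolding QQ_def fdiff_Suc'[symmetric] e2 .
  qed
qed

lemma PP_mult: assumes "PP \<beta>1 f" "PP \<beta>2 g" shows "PP (\<beta>1+\<beta>2) (\<lambda>m. f m * g m)"
  unfolding PP_QQ using PP_mult_aux assms by blast



lemma pochhammer_ge_pow: "(a::nat) ^ n \<le> pochhammer a n"
proof (induction n)
  case 0 then show ?case by simp
next
  case (Suc n)
  have "a ^ Suc n = a^n * a" by simp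
  also have "\<dots> \<le> pochhammer a n * (a + n)" using Suc by (intro mult_mono) auto
  finally show ?case by (simp add: pochhammer_Suc)
qed

lemma pochhammer_pos: "(a::nat) > 0 \<Longrightarrow> pochhammer a n > 0"
  by (simp add: pochhammer_pos)

lemma w_formula: "(fdiff^^l) (\<lambda>m. 1 / of_nat (Suc m) :: complex) m
   = of_nat (fact l) / of_nat (pochhammer (Suc m) (Suc l))"
proof (induction l arbitrary: m)
  case 0 then show ?case by simp
next
  case (Suc l)
  define A where "A = pochhammer (Suc m) (Suc l)"
  define B where "B = pochhammer (Suc (Suc m)) (Suc l)"
  have A0: "A > 0" and B0: "B > 0" by (simp_all add: A_def B_def pochhammer_pos)
  have C1: "pochhammer (Suc m) (Suc (Suc l)) = A * (m + l + 2)"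
    unfolding A_def by (subst pochhammer_Suc) simp
  have C2: "pochhammer (Suc m) (Suc (Suc l)) = (m+1) * B"
    unfolding B_def by (subst pochhammer_rec) simp
  have "(fdiff^^Suc l) (\<lambda>m. 1 / of_nat (Suc m) :: complex) m
      = of_nat (fact l) / of_nat A - of_nat (fact l) / of_nat B"
    by (simp only: funpow.simps comp_def fdiff_def Suc.IH A_def B_def)
  also have "\<dots> = of_nat (fact l) * of_nat (m + l + 2) / of_nat (A * (m+l+2)) - of_nat (fact l) * of_nat (m+1) / of_nat ((m+1) * B)"
  proof -
    have nz: "(of_nat (m+l+2)::complex) \<noteq> 0" "(of_nat (m+1)::complex) \<noteq> 0" by (simp_all only: of_nat_eq_0_iff)
    show ?thesis by (simp only: of_nat_mult mult_divide_mult_cancel_right[OF nz(1)] mult.commute[of "of_nat (fact l)::complex" "of_nat (m+1)"] mult_divide_mult_cancel_left[OF nz(2)])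
  qed
  also have "\<dots> = of_nat (fact l) * (of_nat (m + l + 2) - of_nat (m+1)) / of_nat (pochhammer (Suc m) (Suc (Suc l)))"
    unfolding C1[symmetric] C2[symmetric] by (simp only: diff_divide_distrib right_diff_distrib)
  also have "\<dots> = of_nat (fact (Suc l)) / of_nat (pochhammer (Suc m) (Suc (Suc l)))"
  proof -
    have "(of_nat (fact l) * (of_nat (m + l + 2) - of_nat (m+1)) :: complex) = of_nat (fact (Suc l))"
      by (simp add: algebra_simps)
    thus ?thesis by simp
  qed
  finally show ?case .
qed

lemma PP_w: "PP 1 (\<lambda>m. 1 / of_nat (Suc m) :: complex)"
  unfolding PP_def
proof (intro allI impI exI)
  fix l m and \<epsilon> :: real assume e: "\<epsilon> > 0"
  have P: "real ((Suc m)^(Suc l)) \<le> real (pochhammer (Suc m) (Suc l))"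
    by (simp only: of_nat_le_iff pochhammer_ge_pow)
  have pos: "(0::real) < real ((Suc m)^(Suc l))" using zero_less_power[of "Suc m" "Suc l"] of_nat_0_less_iff by blast
  have "norm ((fdiff^^l) (\<lambda>m. 1 / of_nat (Suc m) :: complex) m) = real (fact l) / real (pochhammer (Suc m) (Suc l))"
    unfolding w_formula by (simp add: norm_divide)
  also have "\<dots> \<le> real (fact l) / real ((Suc m)^(Suc l))"
    using P pos by (intro divide_left_mono) auto
  also have "\<dots> = real (fact l) * (real m + 1) powr (-(real l + 1))"
  proof -
    have e: "-(real l + 1) = - real (Suc l)" by simp
    have 1: "(real m + 1) powr (-(real l + 1)) = inverse ((real m + 1) ^ Suc l)"
      unfolding e powr_minus by (subst powr_realpow) auto
    have 2: "real ((Suc m)^(Suc l)) = (real m + 1) ^ Suc l" by (simp add: algebra_simps)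
    show ?thesis unfolding 1 2 by (simp add: divide_inverse)
  qed
  also have "\<dots> \<le> real (fact l) * (real m + 1) powr (-(real l + 1 - \<epsilon>))"
    using e by (intro mult_left_mono powr_exp_mono) auto
  finally show "norm ((fdiff^^l) (\<lambda>m. 1 / of_nat (Suc m) :: complex) m) \<le> real (fact l) * (real m + 1) powr (-(real l + 1 - \<epsilon>))" .
qed

definition delta0 :: "nat \<Rightarrow> complex" where "delta0 m = (if m = 0 then 1 else 0)"

lemma delta0_diff: "m \<ge> 1 \<Longrightarrow> (fdiff^^l) delta0 m = 0"
  by (induction l arbitrary: m) (auto simp: delta0_def fdiff_def)

lemma PP_delta0: "PP \<beta> delta0"
  unfolding PP_def
proof (intro allI impI exI)
  fix l m and \<epsilon> :: real
  show "norm ((fdiff^^l) delta0 m) \<le> norm ((fdiff^^l) delta0 0) * (real m + 1) powr (-(real l + \<beta> - \<epsilon>))"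
    by (cases "m = 0") (auto simp: delta0_diff)
qed



lemma chains_finite: "finite (chains q m)"
proof -
  have "chains q m \<subseteq> {xs. set xs \<subseteq> {..m} \<and> length xs = q}" unfolding chains_def by blast
  thus ?thesis using finite_lists_length_eq[of "{..m}" q] finite_subset by blast
qed

lemma chains_1: "chains (Suc 0) m = {[m]}"
proof -
  have "ms \<in> chains (Suc 0) m \<longleftrightarrow> ms = [m]" for ms
  proof
    assume "ms \<in> chains (Suc 0) m" then have "length ms = 1" "ms!0 = m" by (simp_all add: chains_def)
    then show "ms = [m]" by (metis length_0_conv length_Suc_conv nth_Cons_0 One_nat_def)
  next
    assume "ms = [m]" then show "ms \<in> chains (Suc 0) m" by (simp add: chains_def)
  qed
  thus ?thesis by blast
qed

lemma ccoef_single0: "ccoef [0] = delta0"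
  unfolding fun_eq_iff ccoef_def delta0_def by (simp add: chains_1)

lemma chains_Cons_iff: "m' # ms \<in> chains (Suc q) m \<longleftrightarrow> m' = m \<and> length ms = q \<and> (\<forall>y\<in>set ms. y \<le> m) \<and> sorted_wrt (\<ge>) ms"
  unfolding chains_def by auto

lemma chains_Suc: assumes "q \<ge> 1"
  shows "chains (Suc q) m = (\<lambda>(j,ms). m # ms) ` (SIGMA j:{..m}. chains q j)"
proof (intro equalityI subsetI)
  fix ms' assume a: "ms' \<in> chains (Suc q) m"
  have "length ms' = Suc q" "ms'!0 = m" using a by (simp_all add: chains_def)
  then obtain ms where ms': "ms' = m # ms" and len: "length ms = q"
    by (cases ms') simp_all
  then obtain y ys where ms: "ms = y # ys" using assms len by (cases ms) simp_all
  have A: "(\<forall>z\<in>set ms. z \<le> m) \<and> sorted_wrt (\<ge>) ms" using a unfolding ms' chains_Cons_iff by blast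
  have "y \<le> m" using A ms by simp
  moreover have "ms \<in> chains q y"
  proof -
    have q: "q = Suc (length ys)" using len ms by simp
    have "(\<forall>z\<in>set ys. z \<le> y) \<and> sorted_wrt (\<ge>) ys" using A ms by simp
    thus ?thesis unfolding q ms chains_Cons_iff by simp
  qed
  ultimately show "ms' \<in> (\<lambda>(j,ms). m # ms) ` (SIGMA j:{..m}. chains q j)"
    using ms' by (intro image_eqI[of _ _ "(y, ms)"]) simp_all
next
  fix ms' assume "ms' \<in> (\<lambda>(j,ms). m # ms) ` (SIGMA j:{..m}. chains q j)"
  then obtain p where p: "p \<in> (SIGMA j:{..m}. chains q j)" "ms' = (\<lambda>(j,ms). m # ms) p" by (rule imageE)
  obtain j ms where pj: "p = (j, ms)" by (cases p)
  have j: "j \<le> m" and ms: "ms \<in> chains q j" and ms': "ms' = m # ms" using p unfolding pj by simp_all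
  have "set ms \<subseteq> {..j}" "length ms = q" "sorted_wrt (\<ge>) ms" using ms unfolding chains_def by simp_all
  hence "(\<forall>z\<in>set ms. z \<le> m) \<and> length ms = q \<and> sorted_wrt (\<ge>) ms" using j by fastforce
  thus "ms' \<in> chains (Suc q) m" unfolding ms' chains_Cons_iff by simp
qed

lemma chains_Suc_inj: "inj_on (\<lambda>(j,ms). m # ms) (SIGMA j:{..m}. chains q j)"
proof (rule inj_onI)
  fix a b assume a: "a \<in> (SIGMA j:{..m}. chains q j)" and b: "b \<in> (SIGMA j:{..m}. chains q j)"
    and e: "(\<lambda>(j,ms). m # ms) a = (\<lambda>(j,ms). m # ms) b"
  obtain j1 ms1 where a': "a = (j1, ms1)" by (cases a)
  obtain j2 ms2 where b': "b = (j2, ms2)" by (cases b)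
  have "ms1 = ms2" using e unfolding a' b' by simp
  moreover have "ms1 ! 0 = j1" "ms2 ! 0 = j2" using a b unfolding a' b' by (simp_all add: chains_def)
  ultimately show "a = b" unfolding a' b' by simp
qed

lemma ccoef_Cons: assumes "xs \<noteq> []"
  shows "ccoef (x # xs) m = (\<Sum>j\<le>m. x ^ (m - j) * ccoef xs j) / of_nat (Suc m)"
proof -
  define q where "q = length xs"
  obtain q' where q': "q = Suc q'" using assms by (cases xs) (simp_all add: q_def)
  define T where "T ms = (\<Prod>i<length xs - 1. xs ! i ^ (ms ! i - ms ! (i+1)) / of_nat (ms ! i + 1))
      * xs ! (length xs - 1) ^ (ms ! (length xs - 1))" for ms
  have q1: "q \<ge> 1" using q' by simp
  have ccx: "ccoef xs j = (\<Sum>ms\<in>chains q j. T ms)" for j by (simp add: ccoef_def T_def q_def)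
  have tm: "(\<Prod>i<length (x#xs) - 1. (x#xs) ! i ^ ((m#ms) ! i - (m#ms) ! (i+1)) / of_nat ((m#ms) ! i + 1))
      * (x#xs) ! (length (x#xs) - 1) ^ ((m#ms) ! (length (x#xs) - 1))
      = x ^ (m - j) / of_nat (Suc m) * T ms" if "ms \<in> chains q j" for j ms
  proof -
    have h: "ms ! 0 = j" using that by (simp add: chains_def)
    have "(\<Prod>i<length (x#xs) - 1. (x#xs) ! i ^ ((m#ms) ! i - (m#ms) ! (i+1)) / of_nat ((m#ms) ! i + 1))
       = (\<Prod>i<Suc q'. (x#xs) ! i ^ ((m#ms) ! i - (m#ms) ! (i+1)) / of_nat ((m#ms) ! i + 1))"
      using q' by (simp add: q_def)
    also have "\<dots> = x ^ (m - j) / of_nat (Suc m) * (\<Prod>i<q'. xs ! i ^ (ms ! i - ms ! (i+1)) / of_nat (ms ! i + 1))"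
      by (subst prod.lessThan_Suc_shift) (simp add: h)
    finally show ?thesis using q' by (simp add: T_def q_def)
  qed
  have "ccoef (x # xs) m = (\<Sum>ms'\<in>chains (Suc q) m.
      (\<Prod>i<length (x#xs) - 1. (x#xs) ! i ^ (ms' ! i - ms' ! (i+1)) / of_nat (ms' ! i + 1))
      * (x#xs) ! (length (x#xs) - 1) ^ (ms' ! (length (x#xs) - 1)))"
    by (simp add: ccoef_def q_def)
  also have "\<dots> = (\<Sum>(j,ms)\<in>(SIGMA j:{..m}. chains q j). x ^ (m - j) / of_nat (Suc m) * T ms)"
    unfolding chains_Suc[OF q1]
    apply (subst sum.reindex[OF chains_Suc_inj])
    apply (rule sum.cong[OF refl])
    using tm by auto
  also have "\<dots> = (\<Sum>j\<le>m. \<Sum>ms\<in>chains q j. x ^ (m - j) / of_nat (Suc m) * T ms)"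
    by (subst sum.Sigma[symmetric]) (auto simp: chains_finite)
  also have "\<dots> = (\<Sum>j\<le>m. x ^ (m - j) * ccoef xs j / of_nat (Suc m))"
    by (intro sum.cong refl) (simp add: ccx sum_distrib_left sum_divide_distrib)
  also have "\<dots> = (\<Sum>j\<le>m. x ^ (m - j) * ccoef xs j) / of_nat (Suc m)"
    by (simp add: sum_divide_distrib)
  finally show ?thesis .
qed



lemma bern: assumes e: "0 < \<epsilon>" "\<epsilon> \<le> 1" and x: "x \<ge> (1::real)"
  shows "\<epsilon> * x powr (\<epsilon>-1) \<le> x powr \<epsilon> - (x-1) powr \<epsilon>"
proof (cases "x = 1")
  case True thus ?thesis using e by simp
next
  case False
  hence x1: "x > 1" using x by simp
  have "((x-1)/x) powr \<epsilon> * 1 powr (1-\<epsilon>) \<le> \<epsilon> * ((x-1)/x) + (1-\<epsilon>) * 1"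
    using x1 e by (intro Youngs_inequality_0) auto
  hence Y: "((x-1)/x) powr \<epsilon> \<le> 1 - \<epsilon> / x" using x1 by (simp add: field_simps)
  have "(x-1) powr \<epsilon> = x powr \<epsilon> * ((x-1)/x) powr \<epsilon>"
    using x1 by (simp add: powr_divide)
  also have "\<dots> \<le> x powr \<epsilon> * (1 - \<epsilon> / x)" using Y by (intro mult_left_mono) auto
  also have "\<dots> = x powr \<epsilon> - \<epsilon> * (x powr \<epsilon> / x powr 1)" using x1 by (simp add: algebra_simps)
  also have "x powr \<epsilon> / x powr 1 = x powr (\<epsilon> - 1)" by (simp add: powr_diff)
  finally show ?thesis by simp
qed

lemma sum_powr_bound: assumes e: "0 < \<epsilon>" "\<epsilon> \<le> 1"
  shows "(\<Sum>j\<le>m. (real j + 1) powr (\<epsilon>-1)) \<le> (real m + 1) powr \<epsilon> / \<epsilon>"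
proof (induction m)
  case 0 thus ?case using e by simp
next
  case (Suc m)
  have b: "\<epsilon> * (real m + 2) powr (\<epsilon>-1) \<le> (real m + 2) powr \<epsilon> - (real m + 1) powr \<epsilon>"
    using bern[OF e, of "real m + 2"] by (simp add: add.commute)
  have "(\<Sum>j\<le>Suc m. (real j + 1) powr (\<epsilon>-1)) = (\<Sum>j\<le>m. (real j + 1) powr (\<epsilon>-1)) + (real m + 2) powr (\<epsilon>-1)"
    by (simp add: add.commute add.left_commute)
  also have "\<dots> \<le> (real m + 1) powr \<epsilon> / \<epsilon> + ((real m + 2) powr \<epsilon> - (real m + 1) powr \<epsilon>) / \<epsilon>"
    using Suc b e by (simp add: field_simps)
  also have "\<dots> = (real m + 2) powr \<epsilon> / \<epsilon>" by (simp add: diff_divide_distrib)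
  also have "\<dots> = (real (Suc m) + 1) powr \<epsilon> / \<epsilon>" by (simp add: add.commute add.left_commute)
  finally show ?case .
qed

lemma fdiff_psum: "fdiff (\<lambda>m. \<Sum>j\<le>m. a j) = (\<lambda>m. - a (Suc m))"
  by (simp add: fdiff_def fun_eq_iff)

lemma PP_psum: assumes a: "PP 1 a" shows "PP 0 (\<lambda>m. \<Sum>j\<le>m. a j)"
proof (rule PP_intro_small[of 1])
  fix l and \<epsilon> :: real assume e: "0 < \<epsilon>" "\<epsilon> \<le> 1"
  show "\<exists>K. \<forall>m. norm ((fdiff^^l) (\<lambda>m. \<Sum>j\<le>m. a j) m) \<le> K * (real m + 1) powr (-(real l + 0 - \<epsilon>))"
  proof (cases l)
    case 0
    obtain K where K: "\<forall>m. norm ((fdiff^^0) a m) \<le> K * (real m + 1) powr (-(real 0 + 1 - \<epsilon>))"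
      using a e unfolding PP_def by blast
    have K0: "K \<ge> 0" using bound_K_nonneg[OF K] .
    show ?thesis
    proof (intro exI allI)
      fix m
      have "norm ((fdiff^^l) (\<lambda>m. \<Sum>j\<le>m. a j) m) \<le> (\<Sum>j\<le>m. norm (a j))"
        using 0 by (simp add: norm_sum)
      also have "\<dots> \<le> (\<Sum>j\<le>m. K * (real j + 1) powr (\<epsilon>-1))"
        using K by (intro sum_mono) simp
      also have "\<dots> \<le> K * ((real m + 1) powr \<epsilon> / \<epsilon>)"
        unfolding sum_distrib_left[symmetric] using K0 sum_powr_bound[OF e] by (rule mult_left_mono[rotated])
      finally show "norm ((fdiff^^l) (\<lambda>m. \<Sum>j\<le>m. a j) m) \<le> (K / \<epsilon>) * (real m + 1) powr (-(real l + 0 - \<epsilon>))"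
        using 0 by simp
    qed
  next
    case (Suc l')
    have "PP 1 (\<lambda>m. - a (Suc m))" using PP_minus[OF PP_shift[OF a]] .
    then obtain K where K: "\<forall>m. norm ((fdiff^^l') (\<lambda>m. - a (Suc m)) m) \<le> K * (real m + 1) powr (-(real l' + 1 - \<epsilon>))"
      using e unfolding PP_def by blast
    have ee: "-(real l' + 1 - \<epsilon>) = -(real l + 0 - \<epsilon>)" using Suc by simp
    show ?thesis using K unfolding Suc fdiff_Suc' fdiff_psum ee by blast
  qed
qed simp



definition conv :: "complex \<Rightarrow> (nat \<Rightarrow> complex) \<Rightarrow> nat \<Rightarrow> complex" where
  "conv u g m = (\<Sum>j\<le>m. u ^ (m - j) * g j)"

lemma conv_0: "conv u g 0 = g 0" by (simp add: conv_def)

lemma conv_Suc: "conv u g (Suc m) = u * conv u g m + g (Suc m)"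
proof -
  have "conv u g (Suc m) = (\<Sum>j\<le>m. u ^ (Suc m - j) * g j) + g (Suc m)"
    by (simp add: conv_def)
  also have "(\<Sum>j\<le>m. u ^ (Suc m - j) * g j) = u * conv u g m"
    unfolding conv_def sum_distrib_left
    by (intro sum.cong refl) (simp add: Suc_diff_le)
  finally show ?thesis .
qed

lemma conv_char: assumes "D 0 = h 0" "\<And>m. D (Suc m) = u * D m + h (Suc m)"
  shows "D = conv u h"
proof
  fix m show "D m = conv u h m"
    by (induction m) (simp_all add: assms conv_0 conv_Suc)
qed

lemma conv_diff: "fdiff (conv u g) = conv u (\<lambda>n. if n = 0 then (1-u) * g 0 - g 1 else fdiff g n)"
proof (rule conv_char)
  show "fdiff (conv u g) 0 = (if 0 = (0::nat) then (1-u) * g 0 - g 1 else fdiff g 0)"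
    by (simp add: fdiff_def conv_0 conv_Suc algebra_simps)
  fix m
  show "fdiff (conv u g) (Suc m) = u * fdiff (conv u g) m + (if Suc m = 0 then (1-u) * g 0 - g 1 else fdiff g (Suc m))"
    by (simp add: fdiff_def conv_Suc algebra_simps)
qed

lemma conv_pow_diff: "\<exists>h. (\<forall>n\<ge>1. h n = (fdiff^^l) g n) \<and> (fdiff^^l) (conv u g) = conv u h"
proof (induction l)
  case 0 thus ?case by auto
next
  case (Suc l)
  then obtain h where h: "\<forall>n\<ge>1. h n = (fdiff^^l) g n" "(fdiff^^l) (conv u g) = conv u h" by blast
  show ?case
  proof (intro exI conjI allI impI)
    show "(fdiff^^Suc l) (conv u g) = conv u (\<lambda>n. if n = 0 then (1-u) * h 0 - h 1 else fdiff h n)"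
      using h(2) conv_diff by simp
    fix n :: nat assume "n \<ge> 1"
    thus "(if n = 0 then (1-u) * h 0 - h 1 else fdiff h n) = (fdiff^^Suc l) g n"
      using h(1) by (simp add: fdiff_def)
  qed
qed

lemma summable_geo_powr: assumes r: "0 \<le> r" "r < 1"
  shows "summable (\<lambda>i. r ^ i * (real i + 1) powr \<alpha>)"
proof (cases "r = 0")
  case True
  show ?thesis
    by (rule summable_ratio_test[of 0 0]) (simp_all add: True)
next
  case False
  hence r0: "r > 0" using r by simp
  define c where "c = (1 + r) / 2"
  have c1: "c < 1" and cr: "c / r > 1" using r r0 by (simp_all add: c_def field_simps)
  have lim: "((\<lambda>n. ((real n + 2) / (real n + 1)) powr \<alpha>) \<longlongrightarrow> 1) at_top" by real_asymp
  have "eventually (\<lambda>n. ((real n + 2) / (real n + 1)) powr \<alpha> < c / r) sequentially"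
    using order_tendstoD(2)[OF lim cr] .
  then obtain N where N: "\<And>n. n \<ge> N \<Longrightarrow> ((real n + 2) / (real n + 1)) powr \<alpha> < c / r"
    unfolding eventually_sequentially by blast
  show ?thesis
  proof (rule summable_ratio_test[OF c1])
    fix n assume n: "n \<ge> N"
    have q: "((real n + 2) / (real n + 1)) powr \<alpha> \<le> c / r" using N[OF n] by simp
    have "r ^ Suc n * (real (Suc n) + 1) powr \<alpha> = r ^ n * (real n + 1) powr \<alpha> * (r * ((real n + 2) / (real n + 1)) powr \<alpha>)"
      by (simp add: powr_divide algebra_simps)
    also have "\<dots> \<le> r ^ n * (real n + 1) powr \<alpha> * c"
    proof (intro mult_left_mono)
      show "r * ((real n + 2) / (real n + 1)) powr \<alpha> \<le> c" using q r0 by (simp add: field_simps)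
    qed (use r in auto)
    finally show "norm (r ^ Suc n * (real (Suc n) + 1) powr \<alpha>) \<le> c * norm (r ^ n * (real n + 1) powr \<alpha>)"
      using r by (simp add: mult.commute)
  qed
qed

lemma conv_bound:
  assumes u: "norm u < 1" and \<alpha>: "\<alpha> \<ge> 0" and K: "\<forall>n. norm (h n) \<le> K * (real n + 1) powr (-\<alpha>)"
  shows "\<exists>K'. \<forall>m. norm (conv u h m) \<le> K' * (real m + 1) powr (-\<alpha>)"
proof -
  define r where "r = norm u"
  have r: "0 \<le> r" "r < 1" using u by (simp_all add: r_def)
  have K0: "K \<ge> 0" using bound_K_nonneg[OF K] .
  define S where "S = (\<Sum>i. r ^ i * (real i + 1) powr \<alpha>)"
  have sm: "summable (\<lambda>i. r ^ i * (real i + 1) powr \<alpha>)" using summable_geo_powr[OF r] .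
  show ?thesis
  proof (intro exI allI)
    fix m
    have key: "(real j + 1) powr (-\<alpha>) \<le> (real m + 1) powr (-\<alpha>) * (real (m - j) + 1) powr \<alpha>" if j: "j \<le> m" for j
    proof -
      have "real m + 1 \<le> (real j + 1) * (real (m - j) + 1)"
      proof -
        have "real (m - j) = real m - real j" using j by simp
        moreover have "0 \<le> real j * (real m - real j)" using j by simp
        ultimately show ?thesis by (simp add: algebra_simps)
      qed
      hence "(real m + 1) powr \<alpha> \<le> ((real j + 1) * (real (m - j) + 1)) powr \<alpha>"
        using \<alpha> by (intro powr_mono2) auto
      also have "\<dots> = (real j + 1) powr \<alpha> * (real (m - j) + 1) powr \<alpha>" by (rule powr_mult)
      finally have *: "(real m + 1) powr \<alpha> \<le> (real j + 1) powr \<alpha> * (real (m - j) + 1) powr \<alpha>" .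
      have p1: "(real m + 1) powr \<alpha> > 0" "(real j + 1) powr \<alpha> > 0" by simp_all
      show ?thesis using * p1 by (simp add: powr_minus field_simps)
    qed
    have "norm (conv u h m) \<le> (\<Sum>j\<le>m. r ^ (m - j) * norm (h j))"
      unfolding conv_def r_def by (rule order_trans[OF norm_sum]) (simp add: norm_mult norm_power)
    also have "\<dots> \<le> (\<Sum>j\<le>m. r ^ (m - j) * (K * ((real m + 1) powr (-\<alpha>) * (real (m - j) + 1) powr \<alpha>)))"
    proof (intro sum_mono mult_left_mono)
      fix j assume "j \<in> {..m}"
      hence "j \<le> m" by simp
      show "norm (h j) \<le> K * ((real m + 1) powr (-\<alpha>) * (real (m - j) + 1) powr \<alpha>)"
        using K[rule_format, of j] mult_left_mono[OF key[OF \<open>j \<le> m\<close>] K0] by linarith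
    qed (use r in auto)
    also have "\<dots> = K * (real m + 1) powr (-\<alpha>) * (\<Sum>j\<le>m. r ^ (m - j) * (real (m - j) + 1) powr \<alpha>)"
      by (simp add: sum_distrib_left algebra_simps)
    also have "(\<Sum>j\<le>m. r ^ (m - j) * (real (m - j) + 1) powr \<alpha>) = (\<Sum>i\<le>m. r ^ i * (real i + 1) powr \<alpha>)"
      by (rule sum.reindex_bij_witness[where i="\<lambda>i. m - i" and j="\<lambda>i. m - i"]) auto
    also have "K * (real m + 1) powr (-\<alpha>) * (\<Sum>i\<le>m. r ^ i * (real i + 1) powr \<alpha>) \<le> K * (real m + 1) powr (-\<alpha>) * S"
    proof (rule mult_left_mono)
      show "(\<Sum>i\<le>m. r ^ i * (real i + 1) powr \<alpha>) \<le> S" unfolding S_def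
        using sm r by (intro sum_le_suminf) auto
    qed (use K0 in simp)
    finally show "norm (conv u h m) \<le> (K * S) * (real m + 1) powr (-\<alpha>)"
      by (simp add: algebra_simps)
  qed
qed



lemma PP_conv: assumes u: "norm u < 1" and a: "PP 1 a" shows "PP 1 (conv u a)"
proof (rule PP_intro_small[of 1])
  fix l and \<epsilon> :: real assume e: "0 < \<epsilon>" "\<epsilon> \<le> 1"
  define \<alpha> where "\<alpha> = real l + 1 - \<epsilon>"
  have \<alpha>0: "\<alpha> \<ge> 0" using e by (simp add: \<alpha>_def)
  obtain h where h: "\<forall>n\<ge>1. h n = (fdiff^^l) a n" "(fdiff^^l) (conv u a) = conv u h"
    using conv_pow_diff by blast
  obtain K where K: "\<forall>m. norm ((fdiff^^l) a m) \<le> K * (real m + 1) powr (-(real l + 1 - \<epsilon>))"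
    using a e unfolding PP_def by blast
  have K0: "K \<ge> 0" using bound_K_nonneg[OF K] .
  have hb: "\<forall>n. norm (h n) \<le> max K (norm (h 0)) * (real n + 1) powr (-\<alpha>)"
  proof
    fix n show "norm (h n) \<le> max K (norm (h 0)) * (real n + 1) powr (-\<alpha>)"
    proof (cases "n = 0")
      case True thus ?thesis by simp
    next
      case False
      hence "norm (h n) \<le> K * (real n + 1) powr (-\<alpha>)" using h(1) K by (simp add: \<alpha>_def)
      also have "\<dots> \<le> max K (norm (h 0)) * (real n + 1) powr (-\<alpha>)" by (intro mult_right_mono) auto
      finally show ?thesis .
    qed
  qed
  obtain K' where "\<forall>m. norm (conv u h m) \<le> K' * (real m + 1) powr (-\<alpha>)"
    using conv_bound[OF u \<alpha>0 hb] by blast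
  thus "\<exists>K. \<forall>m. norm ((fdiff^^l) (conv u a) m) \<le> K * (real m + 1) powr (-(real l + 1 - \<epsilon>))"
    unfolding h(2) \<alpha>_def by blast
qed simp

lemma PP_step: assumes x: "norm x < 1 \<or> x = 1" and a: "PP 1 a"
  shows "PP 1 (\<lambda>m. (\<Sum>j\<le>m. x ^ (m - j) * a j) / of_nat (Suc m))"
proof -
  have b: "PP 0 (conv x a)"
  proof (cases "x = 1")
    case True
    have "conv x a = (\<lambda>m. \<Sum>j\<le>m. a j)" by (simp add: True conv_def fun_eq_iff)
    thus ?thesis using PP_psum[OF a] by simp
  next
    case False
    hence "norm x < 1" using x by simp
    from PP_mono[OF PP_conv[OF this a]] show ?thesis by simp
  qed
  have "PP (0 + 1) (\<lambda>m. conv x a m * (1 / of_nat (Suc m)))"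
    by (rule PP_mult[OF b PP_w])
  moreover have "(\<lambda>m. conv x a m * (1 / of_nat (Suc m))) = (\<lambda>m. (\<Sum>j\<le>m. x ^ (m - j) * a j) / of_nat (Suc m))"
    by (simp add: conv_def fun_eq_iff)
  ultimately show ?thesis by simp
qed

lemma PP_ccoef: "(\<forall>i<length s. norm (s ! i) < 1 \<or> s ! i = 1) \<Longrightarrow> PP 1 (ccoef (s @ [0]))"
proof (induction s)
  case Nil thus ?case by (simp add: ccoef_single0 PP_delta0)
next
  case (Cons x s)
  have hx: "norm x < 1 \<or> x = 1" using Cons.prems by force
  have hs: "\<forall>i<length s. norm (s ! i) < 1 \<or> s ! i = 1" using Cons.prems by force
  have "ccoef ((x # s) @ [0]) = (\<lambda>m. (\<Sum>j\<le>m. x ^ (m - j) * ccoef (s @ [0]) j) / of_nat (Suc m))"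
    using ccoef_Cons[of "s @ [0]" x] by (simp add: fun_eq_iff)
  thus ?case using PP_step[OF hx Cons.IH[OF hs]] by simp
qed

lemma PP_bigO: assumes "PP 1 f"
  shows "\<forall>\<epsilon>>0. (\<lambda>m. norm ((fdiff ^^ l) f m)) \<in> O(\<lambda>m. real m powr (- (real l + 1 - \<epsilon>)))"
proof (intro allI impI)
  fix \<epsilon> :: real assume "\<epsilon> > 0"
  then obtain K where K: "\<forall>m. norm ((fdiff^^l) f m) \<le> K * (real m + 1) powr (-(real l + 1 - \<epsilon>))"
    using assms unfolding PP_def by blast
  have K0: "K \<ge> 0" using bound_K_nonneg[OF K] .
  define x where "x = -(real l + 1 - \<epsilon>)"
  show "(\<lambda>m. norm ((fdiff ^^ l) f m)) \<in> O(\<lambda>m. real m powr (- (real l + 1 - \<epsilon>)))"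
  proof (rule bigoI[where c = "K * max 1 (2 powr x)"])
    show "\<forall>\<^sub>F m in at_top. norm (norm ((fdiff ^^ l) f m)) \<le> K * max 1 (2 powr x) * norm (real m powr (- (real l + 1 - \<epsilon>)))"
      unfolding eventually_at_top_linorder
    proof (intro exI allI impI)
      fix m :: nat assume m: "m \<ge> 1"
      have e1: "real (m - 1) + 2 = real m + 1" "real (m - 1) + 1 = real m" using m by auto
      have "norm (norm ((fdiff ^^ l) f m)) \<le> K * (real m + 1) powr x" using K by (simp add: x_def)
      also have "\<dots> \<le> K * (max 1 (2 powr x) * real m powr x)"
        using shift_powr_le[of "m - 1" x] K0 unfolding e1 by (intro mult_left_mono) auto
      finally show "norm (norm ((fdiff ^^ l) f m)) \<le> K * max 1 (2 powr x) * norm (real m powr (- (real l + 1 - \<epsilon>)))"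
        by (simp add: x_def mult.assoc)
    qed
  qed
qed

theorem proposition3p3:
  fixes s :: "complex list" and p l :: nat
  assumes "p \<ge> 1" and "length s = p"
    and "\<forall>i<p. norm (s ! i) < 1 \<or> s ! i = 1"
  shows "\<forall>\<epsilon>>0. (\<lambda>m. norm ((fdiff ^^ l) (ccoef (s @ [0])) m))
           \<in> O(\<lambda>m. real m powr (- (real l + 1 - \<epsilon>)))"
  using PP_bigO[OF PP_ccoef] assms by simp

end
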